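(* Let $G$ be a complete split graph with partition $(K,S)$, $K\neq\emptyset$, whose vertices are each colored $A$, $B$ or $C$. If every vertex of $K$ has color $A$ (resp. $B$), then the Normal Partizan Domination game on $G$ has the same value as the game on the star whose leaves are the vertices of $S$ (with their colors) and whose center has color $A$ (resp. $B$). Otherwise, the game on $G$ has the same value as the game on that star with center colored $C$.
   Context: A complete split graph is a graph $G$ whose vertex set has a partition $(K,S)$ such that $K$ induces a clique, $S$ is an independent set, and every vertex of $K$ is adjacent to every vertex of $S$. Normal Partizan Domination game: a finite graph has each vertex colored $A$, $B$ or $C$. Alice and Bob alternately select a vertex; Alice may only select vertices colored $A$ or $C$, Bob only vertices colored $B$ or $C$. A vertex $u$ dominates $v$ if $u=v$ or $uv$ is an edge. A vertex may be selected only if it is playable, i.e. it dominates at least one vertex not dominated by the previously selected vertices; the game ends when the selected vertices form a dominating set. Under normal play the player unable to move loses. The game is regarded as a partizan combinatorial game with Alice as Left and Bob as Right, and its value is its value in Conway's combinatorial game theory ($G=H$ iff $G+(-H)$ is a second-player win). *)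

theory Defs
  imports Main
begin

text \<open>A game is given by a left-move relation L and a right-move relation R on positions
  (L p q: q is a Left option of p).  lwins_first: Left wins when Left moves first;
  lwins_second: Left wins when Right moves first.  Normal play: a player unable to move loses.\<close>

inductive lwins_first :: "('p \<Rightarrow> 'p \<Rightarrow> bool) \<Rightarrow> ('p \<Rightarrow> 'p \<Rightarrow> bool) \<Rightarrow> 'p \<Rightarrow> bool"
  and lwins_second :: "('p \<Rightarrow> 'p \<Rightarrow> bool) \<Rightarrow> ('p \<Rightarrow> 'p \<Rightarrow> bool) \<Rightarrow> 'p \<Rightarrow> bool"
  for L R where
  "L p q \<Longrightarrow> lwins_second L R q \<Longrightarrow> lwins_first L R p"
| "(\<forall>q. R p q \<longrightarrow> lwins_first L R q) \<Longrightarrow> lwins_second L R p"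

text \<open>Second-player win: Left wins when Right starts and Right wins when Left starts
  (the latter is the former with the roles of the players swapped).\<close>
definition second_player_win :: "('p \<Rightarrow> 'p \<Rightarrow> bool) \<Rightarrow> ('p \<Rightarrow> 'p \<Rightarrow> bool) \<Rightarrow> 'p \<Rightarrow> bool" where
  "second_player_win L R p \<longleftrightarrow> lwins_second L R p \<and> lwins_second R L p"

text \<open>Disjunctive sum G + (-H): Left moves as Left in G or as Right in H, and vice versa.\<close>
definition sum_neg_L :: "('p \<Rightarrow> 'p \<Rightarrow> bool) \<Rightarrow> ('p \<Rightarrow> 'p \<Rightarrow> bool) \<Rightarrow>
    ('q \<Rightarrow> 'q \<Rightarrow> bool) \<Rightarrow> ('q \<Rightarrow> 'q \<Rightarrow> bool) \<Rightarrow> 'p \<times> 'q \<Rightarrow> 'p \<times> 'q \<Rightarrow> bool" where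
  "sum_neg_L LG RG LH RH x y \<longleftrightarrow>
     (LG (fst x) (fst y) \<and> snd y = snd x) \<or> (fst y = fst x \<and> RH (snd x) (snd y))"

definition sum_neg_R :: "('p \<Rightarrow> 'p \<Rightarrow> bool) \<Rightarrow> ('p \<Rightarrow> 'p \<Rightarrow> bool) \<Rightarrow>
    ('q \<Rightarrow> 'q \<Rightarrow> bool) \<Rightarrow> ('q \<Rightarrow> 'q \<Rightarrow> bool) \<Rightarrow> 'p \<times> 'q \<Rightarrow> 'p \<times> 'q \<Rightarrow> bool" where
  "sum_neg_R LG RG LH RH x y \<longleftrightarrow>
     (RG (fst x) (fst y) \<and> snd y = snd x) \<or> (fst y = fst x \<and> LH (snd x) (snd y))"

text \<open>Conway equality of the games rooted at g and h: G + (-H) is a second-player win.\<close>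
definition game_eq :: "('p \<Rightarrow> 'p \<Rightarrow> bool) \<Rightarrow> ('p \<Rightarrow> 'p \<Rightarrow> bool) \<Rightarrow> 'p \<Rightarrow>
    ('q \<Rightarrow> 'q \<Rightarrow> bool) \<Rightarrow> ('q \<Rightarrow> 'q \<Rightarrow> bool) \<Rightarrow> 'q \<Rightarrow> bool" where
  "game_eq LG RG g LH RH h \<longleftrightarrow>
     second_player_win (sum_neg_L LG RG LH RH) (sum_neg_R LG RG LH RH) (g, h)"

datatype colour = A | B | C

definition simple_graph :: "'v set \<Rightarrow> ('v \<Rightarrow> 'v \<Rightarrow> bool) \<Rightarrow> bool" where
  "simple_graph V E \<longleftrightarrow> finite V \<and> (\<forall>x y. E x y \<longrightarrow> x \<in> V \<and> y \<in> V \<and> x \<noteq> y \<and> E y x)"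

definition dominates :: "('v \<Rightarrow> 'v \<Rightarrow> bool) \<Rightarrow> 'v \<Rightarrow> 'v \<Rightarrow> bool" where
  "dominates E u w \<longleftrightarrow> u = w \<or> E u w"

definition playable :: "'v set \<Rightarrow> ('v \<Rightarrow> 'v \<Rightarrow> bool) \<Rightarrow> 'v set \<Rightarrow> 'v \<Rightarrow> bool" where
  "playable V E P v \<longleftrightarrow> v \<in> V \<and> (\<exists>w\<in>V. dominates E v w \<and> \<not> (\<exists>u\<in>P. dominates E u w))"

text \<open>Positions are the sets of selected vertices; the game starts at the empty set.\<close>
definition dom_L :: "'v set \<Rightarrow> ('v \<Rightarrow> 'v \<Rightarrow> bool) \<Rightarrow> ('v \<Rightarrow> colour) \<Rightarrow> 'v set \<Rightarrow> 'v set \<Rightarrow> bool" where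
  "dom_L V E col P P' \<longleftrightarrow> (\<exists>v. col v \<in> {A, C} \<and> playable V E P v \<and> P' = insert v P)"

definition dom_R :: "'v set \<Rightarrow> ('v \<Rightarrow> 'v \<Rightarrow> bool) \<Rightarrow> ('v \<Rightarrow> colour) \<Rightarrow> 'v set \<Rightarrow> 'v set \<Rightarrow> bool" where
  "dom_R V E col P P' \<longleftrightarrow> (\<exists>v. col v \<in> {B, C} \<and> playable V E P v \<and> P' = insert v P)"

definition dom_game_eq :: "'v set \<Rightarrow> ('v \<Rightarrow> 'v \<Rightarrow> bool) \<Rightarrow> ('v \<Rightarrow> colour) \<Rightarrow>
    'w set \<Rightarrow> ('w \<Rightarrow> 'w \<Rightarrow> bool) \<Rightarrow> ('w \<Rightarrow> colour) \<Rightarrow> bool" where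
  "dom_game_eq V1 E1 c1 V2 E2 c2 \<longleftrightarrow>
     game_eq (dom_L V1 E1 c1) (dom_R V1 E1 c1) {} (dom_L V2 E2 c2) (dom_R V2 E2 c2) {}"

definition complete_split_graph :: "'v set \<Rightarrow> ('v \<Rightarrow> 'v \<Rightarrow> bool) \<Rightarrow> 'v set \<Rightarrow> 'v set \<Rightarrow> bool" where
  "complete_split_graph V E K S \<longleftrightarrow> simple_graph V E \<and> V = K \<union> S \<and> K \<inter> S = {} \<and>
     (\<forall>x\<in>K. \<forall>y\<in>K. x \<noteq> y \<longrightarrow> E x y) \<and>
     (\<forall>x\<in>S. \<forall>y\<in>S. \<not> E x y) \<and>
     (\<forall>x\<in>K. \<forall>y\<in>S. E x y)"

text \<open>The star with leaves S (vertices Some s) and centre None.\<close>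
definition star_V :: "'v set \<Rightarrow> 'v option set" where
  "star_V S = insert None (Some ` S)"

definition star_E :: "'v set \<Rightarrow> 'v option \<Rightarrow> 'v option \<Rightarrow> bool" where
  "star_E S x y \<longleftrightarrow> x \<in> star_V S \<and> y \<in> star_V S \<and> ((x = None) \<noteq> (y = None))"

definition star_col :: "colour \<Rightarrow> ('v \<Rightarrow> colour) \<Rightarrow> 'v option \<Rightarrow> colour" where
  "star_col c col x = (case x of None \<Rightarrow> c | Some s \<Rightarrow> col s)"

end

theory Submission
  imports Defs
begin


lemma bisim_second:
  fixes Rel :: "'p \<Rightarrow> 'q \<Rightarrow> bool"
  assumes wf: "wf {(p', p). LG p p' \<or> RG p p'}"
  and b2: "\<And>p q q'. Rel p q \<Longrightarrow> LH q q' \<Longrightarrow> \<exists>p'. LG p p' \<and> Rel p' q'"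
  and b3: "\<And>p q p'. Rel p q \<Longrightarrow> RG p p' \<Longrightarrow> \<exists>q'. RH q q' \<and> Rel p' q'"
  shows "Rel p q \<Longrightarrow> lwins_second (sum_neg_L LG RG LH RH) (sum_neg_R LG RG LH RH) (p, q)"
proof (induction p arbitrary: q rule: wf_induct[OF wf])
  case (1 p q)
  show ?case
  proof (rule lwins_first_lwins_second.intros(2), intro allI impI)
    fix y assume "sum_neg_R LG RG LH RH (p,q) y"
    then consider (a) "RG p (fst y)" "snd y = q" | (b) "fst y = p" "LH q (snd y)"
      unfolding sum_neg_R_def by auto
    then show "lwins_first (sum_neg_L LG RG LH RH) (sum_neg_R LG RG LH RH) y"
    proof cases
      case a
      obtain q' where q': "RH q q'" "Rel (fst y) q'" using b3[OF 1(2) a(1)] by blast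
      have "lwins_second (sum_neg_L LG RG LH RH) (sum_neg_R LG RG LH RH) (fst y, q')"
        using 1(1) a(1) q'(2) by blast
      moreover have "sum_neg_L LG RG LH RH y (fst y, q')" using a q' unfolding sum_neg_L_def by auto
      ultimately show ?thesis by (blast intro: lwins_first_lwins_second.intros(1))
    next
      case b
      obtain p' where p': "LG p p'" "Rel p' (snd y)" using b2[OF 1(2) b(2)] by blast
      have "lwins_second (sum_neg_L LG RG LH RH) (sum_neg_R LG RG LH RH) (p', snd y)"
        using 1(1) p' by blast
      moreover have "sum_neg_L LG RG LH RH y (p', snd y)" using b p' unfolding sum_neg_L_def by auto
      ultimately show ?thesis by (blast intro: lwins_first_lwins_second.intros(1))
    qed
  qed
qed

lemma bisim_eq:
  fixes Rel :: "'p \<Rightarrow> 'q \<Rightarrow> bool"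
  assumes wf: "wf {(p', p). LG p p' \<or> RG p p'}"
  and b1: "\<And>p q p'. Rel p q \<Longrightarrow> LG p p' \<Longrightarrow> \<exists>q'. LH q q' \<and> Rel p' q'"
  and b2: "\<And>p q q'. Rel p q \<Longrightarrow> LH q q' \<Longrightarrow> \<exists>p'. LG p p' \<and> Rel p' q'"
  and b3: "\<And>p q p'. Rel p q \<Longrightarrow> RG p p' \<Longrightarrow> \<exists>q'. RH q q' \<and> Rel p' q'"
  and b4: "\<And>p q q'. Rel p q \<Longrightarrow> RH q q' \<Longrightarrow> \<exists>p'. RG p p' \<and> Rel p' q'"
  and r: "Rel g h"
  shows "game_eq LG RG g LH RH h"
proof -
  have 1: "lwins_second (sum_neg_L LG RG LH RH) (sum_neg_R LG RG LH RH) (g, h)"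
    by (rule bisim_second[OF wf b2 b3 r])
  have wf2: "wf {(p', p). RG p p' \<or> LG p p'}" using wf by (simp add: disj_commute)
  have 2: "lwins_second (sum_neg_L RG LG RH LH) (sum_neg_R RG LG RH LH) (g, h)"
    by (rule bisim_second[OF wf2 b4 b1 r])
  have e1: "sum_neg_L RG LG RH LH = sum_neg_R LG RG LH RH"
    by (auto simp: fun_eq_iff sum_neg_L_def sum_neg_R_def)
  have e2: "sum_neg_R RG LG RH LH = sum_neg_L LG RG LH RH"
    by (auto simp: fun_eq_iff sum_neg_L_def sum_neg_R_def)
  show ?thesis using 1 2 unfolding game_eq_def second_player_win_def e1 e2 by simp
qed



definition mv :: "'v set \<Rightarrow> ('v \<Rightarrow> 'v \<Rightarrow> bool) \<Rightarrow> ('v \<Rightarrow> colour) \<Rightarrow> colour set \<Rightarrow> 'v set \<Rightarrow> 'v set \<Rightarrow> bool" where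
  "mv V E col D P P' \<longleftrightarrow> (\<exists>v. col v \<in> D \<and> playable V E P v \<and> P' = insert v P)"

lemma G_playable:
  assumes csg: "complete_split_graph V E K S" and P: "P \<subseteq> V"
  shows "playable V E P v \<longleftrightarrow> (v \<in> K \<and> P \<inter> K = {} \<and> (P = {} \<or> \<not> S \<subseteq> P))
        \<or> (v \<in> S \<and> P \<inter> K = {} \<and> v \<notin> P)"
proof
  assume pl: "playable V E P v"
  then obtain w where v: "v \<in> V" and w: "w \<in> V" "dominates E v w" "\<not> (\<exists>u\<in>P. dominates E u w)"
    unfolding playable_def by blast
  have vP: "v \<notin> P" using w by blast
  have PK: "P \<inter> K = {}"
  proof (rule ccontr)
    assume "P \<inter> K \<noteq> {}" then obtain k where "k \<in> P" "k \<in> K" by blast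
    then show False using w csg unfolding complete_split_graph_def simple_graph_def dominates_def
      by (metis Int_iff Un_iff empty_iff)
  qed
  show "(v \<in> K \<and> P \<inter> K = {} \<and> (P = {} \<or> \<not> S \<subseteq> P)) \<or> (v \<in> S \<and> P \<inter> K = {} \<and> v \<notin> P)"
  proof (cases "v \<in> K")
    case True
    have "P = {} \<or> \<not> S \<subseteq> P"
    proof (rule ccontr)
      assume "\<not> (P = {} \<or> \<not> S \<subseteq> P)"
      then obtain s where s: "s \<in> P" and SP: "S \<subseteq> P" by blast
      have sS: "s \<in> S" using s P PK csg unfolding complete_split_graph_def by blast
      show False
      proof (cases "w \<in> S")
        case True then show ?thesis using SP w unfolding dominates_def by blast
      next
        case False then have "w \<in> K" using w csg unfolding complete_split_graph_def by blast
        then have "E s w" using sS csg unfolding complete_split_graph_def simple_graph_def by blast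
        then show ?thesis using s w unfolding dominates_def by blast
      qed
    qed
    then show ?thesis using True PK by blast
  next
    case False
    then have "v \<in> S" using v csg unfolding complete_split_graph_def by blast
    then show ?thesis using PK vP by blast
  qed
next
  assume h: "(v \<in> K \<and> P \<inter> K = {} \<and> (P = {} \<or> \<not> S \<subseteq> P)) \<or> (v \<in> S \<and> P \<inter> K = {} \<and> v \<notin> P)"
  have PS: "P \<inter> K = {} \<Longrightarrow> P \<subseteq> S" using P csg unfolding complete_split_graph_def by blast
  from h show "playable V E P v"
  proof
    assume a: "v \<in> K \<and> P \<inter> K = {} \<and> (P = {} \<or> \<not> S \<subseteq> P)"
    then have vV: "v \<in> V" using csg unfolding complete_split_graph_def by blast
    show ?thesis
    proof (cases "P = {}")
      case True then show ?thesis using vV unfolding playable_def dominates_def by blast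
    next
      case False
      then obtain s where s: "s \<in> S" "s \<notin> P" using a by blast
      have sV: "s \<in> V" using s csg unfolding complete_split_graph_def by blast
      have "dominates E v s" using a s csg unfolding complete_split_graph_def dominates_def by blast
      moreover have "\<not> (\<exists>u\<in>P. dominates E u s)"
        using s PS a csg unfolding complete_split_graph_def dominates_def by blast
      ultimately show ?thesis using vV sV unfolding playable_def by blast
    qed
  next
    assume a: "v \<in> S \<and> P \<inter> K = {} \<and> v \<notin> P"
    then have vV: "v \<in> V" using csg unfolding complete_split_graph_def by blast
    have "\<not> (\<exists>u\<in>P. dominates E u v)"
      using a PS csg unfolding complete_split_graph_def dominates_def by blast
    then show ?thesis using vV unfolding playable_def dominates_def by blast
  qed
qed

lemma star_playable:
  assumes Q: "Q \<subseteq> star_V S"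
  shows "playable (star_V S) (star_E S) Q x \<longleftrightarrow> (x = None \<and> None \<notin> Q \<and> (Q = {} \<or> \<not> Some ` S \<subseteq> Q))
        \<or> (\<exists>s\<in>S. x = Some s \<and> None \<notin> Q \<and> Some s \<notin> Q)"
proof
  assume "playable (star_V S) (star_E S) Q x"
  then obtain w where x: "x \<in> star_V S" and w: "w \<in> star_V S" "dominates (star_E S) x w"
     "\<not> (\<exists>u\<in>Q. dominates (star_E S) u w)"
    unfolding playable_def by blast
  have xQ: "x \<notin> Q" using w by blast
  have NQ: "None \<notin> Q"
  proof
    assume "None \<in> Q"
    then show False using w unfolding dominates_def star_E_def star_V_def
      by (metis insertCI option.distinct(1))
  qed
  show "(x = None \<and> None \<notin> Q \<and> (Q = {} \<or> \<not> Some ` S \<subseteq> Q))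
        \<or> (\<exists>s\<in>S. x = Some s \<and> None \<notin> Q \<and> Some s \<notin> Q)"
  proof (cases x)
    case None
    have "Q = {} \<or> \<not> Some ` S \<subseteq> Q"
    proof (rule ccontr)
      assume "\<not> (Q = {} \<or> \<not> Some ` S \<subseteq> Q)"
      then obtain q where q: "q \<in> Q" and SQ: "Some ` S \<subseteq> Q" by blast
      show False
      proof (cases w)
        case None
        have "q \<noteq> None" using q NQ by metis
        moreover have "q \<in> star_V S" using q Q by blast
        ultimately have "star_E S q w" using None w unfolding star_E_def by auto
        then show False using q w unfolding dominates_def by blast
      next
        case (Some s) then have "s \<in> S" using w unfolding star_V_def by auto
        then show False using SQ w Some unfolding dominates_def by blast
      qed
    qed
    then show ?thesis using None NQ by blast
  next
    case (Some s)
    then show ?thesis using x xQ NQ unfolding star_V_def by auto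
  qed
next
  assume "(x = None \<and> None \<notin> Q \<and> (Q = {} \<or> \<not> Some ` S \<subseteq> Q))
        \<or> (\<exists>s\<in>S. x = Some s \<and> None \<notin> Q \<and> Some s \<notin> Q)"
  then show "playable (star_V S) (star_E S) Q x"
  proof
    assume a: "x = None \<and> None \<notin> Q \<and> (Q = {} \<or> \<not> Some ` S \<subseteq> Q)"
    show ?thesis
    proof (cases "Q = {}")
      case True then show ?thesis using a unfolding playable_def dominates_def star_V_def by blast
    next
      case False
      then obtain s where s: "s \<in> S" "Some s \<notin> Q" using a by blast
      have "\<not> (\<exists>u\<in>Q. dominates (star_E S) u (Some s))"
        using s a Q unfolding dominates_def star_E_def star_V_def by auto
      moreover have "dominates (star_E S) x (Some s)" using a s unfolding dominates_def star_E_def star_V_def by auto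
      ultimately show ?thesis using a s unfolding playable_def star_V_def by blast
    qed
  next
    assume "\<exists>s\<in>S. x = Some s \<and> None \<notin> Q \<and> Some s \<notin> Q"
    then obtain s where s: "s \<in> S" "x = Some s" "None \<notin> Q" "Some s \<notin> Q" by blast
    have "\<not> (\<exists>u\<in>Q. dominates (star_E S) u (Some s))"
      using s Q unfolding dominates_def star_E_def star_V_def by auto
    then show ?thesis using s unfolding playable_def star_V_def dominates_def by blast
  qed
qed



definition fmap :: "'v set \<Rightarrow> 'v set \<Rightarrow> 'v set \<Rightarrow> 'v option set" where
  "fmap K S P = (if P \<inter> K = {} then Some ` (P \<inter> S) else insert None (Some ` (P \<inter> S)))"

lemma playable_V: "playable V E P v \<Longrightarrow> v \<in> V \<and> v \<notin> P"
  unfolding playable_def dominates_def by blast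

lemma wf_mv:
  assumes "finite V"
  shows "wf {(p', p). mv V E col D1 p p' \<or> mv V E col D2 p p'}"
proof (rule wf_subset[OF wf_measure[of "\<lambda>P. card (V - P)"]])
  show "{(p', p). mv V E col D1 p p' \<or> mv V E col D2 p p'} \<subseteq> measure (\<lambda>P. card (V - P))"
  proof clarify
    fix p p' assume "mv V E col D1 p p' \<or> mv V E col D2 p p'"
    then obtain v where v: "v \<in> V" "v \<notin> p" "p' = insert v p"
      unfolding mv_def using playable_V by metis
    have "V - p' = (V - p) - {v}" using v by blast
    moreover have "v \<in> V - p" using v by blast
    ultimately have "card (V - p') < card (V - p)"
      using assms by (metis card_Diff1_less finite_Diff)
    then show "(p', p) \<in> measure (\<lambda>P. card (V - P))" by simp
  qed
qed

lemma mv_intro: "col x \<in> D \<Longrightarrow> playable V E P x \<Longrightarrow> mv V E col D P (insert x P)"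
  unfolding mv_def by blast

lemma fmap_K: "P \<inter> K = {} \<Longrightarrow> P \<subseteq> S \<Longrightarrow> fmap K S P = Some ` P"
  unfolding fmap_def by (simp add: Int_absorb2)

lemma fmap_None: "None \<in> fmap K S P \<longleftrightarrow> P \<inter> K \<noteq> {}"
  unfolding fmap_def by auto

lemma fmap_ins_K: "k \<in> K \<Longrightarrow> K \<inter> S = {} \<Longrightarrow> P \<subseteq> S \<Longrightarrow> fmap K S (insert k P) = insert None (Some ` P)"
proof -
  assume a: "k \<in> K" "K \<inter> S = {}" "P \<subseteq> S"
  have "insert k P \<inter> S = P" using a by blast
  moreover have "insert k P \<inter> K \<noteq> {}" using a by blast
  ultimately show ?thesis unfolding fmap_def using a(1) by simp
qed

lemma fmap_ins_S: "s \<in> S \<Longrightarrow> P \<inter> K = {} \<Longrightarrow> K \<inter> S = {} \<Longrightarrow> P \<subseteq> S \<Longrightarrow> fmap K S (insert s P) = insert (Some s) (Some ` P)"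
proof -
  assume a: "s \<in> S" "P \<inter> K = {}" "K \<inter> S = {}" "P \<subseteq> S"
  have "insert s P \<inter> K = {}" "insert s P \<subseteq> S" using a by blast+
  then show ?thesis using fmap_K by (metis image_insert)
qed

lemma Some_sub: "Some ` S \<subseteq> Some ` P \<longleftrightarrow> S \<subseteq> P"
  by (simp add: inj_image_subset_iff)

lemma fwd:
  assumes csg: "complete_split_graph V E K S"
    and hc: "c \<in> D \<longleftrightarrow> (\<exists>k\<in>K. col k \<in> D)"
    and P: "P \<subseteq> V" and m: "mv V E col D P P'"
  shows "mv (star_V S) (star_E S) (star_col c col) D (fmap K S P) (fmap K S P') \<and> P' \<subseteq> V"
proof -
  obtain v where v: "col v \<in> D" "playable V E P v" "P' = insert v P" using m unfolding mv_def by blast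
  have dj: "K \<inter> S = {}" and VKS: "V = K \<union> S" using csg unfolding complete_split_graph_def by blast+
  have Q: "fmap K S P \<subseteq> star_V S" unfolding fmap_def star_V_def by auto
  have pl: "(v \<in> K \<and> P \<inter> K = {} \<and> (P = {} \<or> \<not> S \<subseteq> P)) \<or> (v \<in> S \<and> P \<inter> K = {} \<and> v \<notin> P)"
    using iffD1[OF G_playable[OF csg P] v(2)] .
  have PS: "P \<inter> K = {} \<Longrightarrow> P \<subseteq> S" using P VKS by blast
  have P'V: "P' \<subseteq> V" using v(3) P playable_V[OF v(2)] by blast
  from pl show ?thesis
  proof
    assume a: "v \<in> K \<and> P \<inter> K = {} \<and> (P = {} \<or> \<not> S \<subseteq> P)"
    have PS': "P \<subseteq> S" using a PS by blast
    have fP: "fmap K S P = Some ` P" using a PS' fmap_K by blast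
    have fP': "fmap K S P' = insert None (fmap K S P)"
      using fmap_ins_K[of v K S P] a dj PS' v(3) fP by simp
    have "Some ` P = {} \<or> \<not> Some ` S \<subseteq> Some ` P" using a Some_sub[of S P] by blast
    then have "playable (star_V S) (star_E S) (fmap K S P) None"
      using star_playable[OF Q, of None] fP by simp
    moreover have "star_col c col None \<in> D" using hc a v(1) unfolding star_col_def by auto
    ultimately have "mv (star_V S) (star_E S) (star_col c col) D (fmap K S P) (insert None (fmap K S P))"
      by (rule mv_intro[rotated])
    then show ?thesis using fP' P'V by simp
  next
    assume a: "v \<in> S \<and> P \<inter> K = {} \<and> v \<notin> P"
    have PS': "P \<subseteq> S" using a PS by blast
    have fP: "fmap K S P = Some ` P" using a PS' fmap_K by blast
    have fP': "fmap K S P' = insert (Some v) (fmap K S P)"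
      using fmap_ins_S[of v S P K] a dj PS' v(3) fP by simp
    have "None \<notin> Some ` P" "Some v \<notin> Some ` P" using a by auto
    then have "playable (star_V S) (star_E S) (fmap K S P) (Some v)"
      using star_playable[OF Q, of "Some v"] fP a by blast
    moreover have "star_col c col (Some v) \<in> D" using v(1) unfolding star_col_def by simp
    ultimately have "mv (star_V S) (star_E S) (star_col c col) D (fmap K S P) (insert (Some v) (fmap K S P))"
      by (rule mv_intro[rotated])
    then show ?thesis using fP' P'V by simp
  qed
qed

lemma bwd:
  assumes csg: "complete_split_graph V E K S"
    and hc: "c \<in> D \<longleftrightarrow> (\<exists>k\<in>K. col k \<in> D)"
    and P: "P \<subseteq> V" and m: "mv (star_V S) (star_E S) (star_col c col) D (fmap K S P) Q'"
  shows "\<exists>P'. mv V E col D P P' \<and> P' \<subseteq> V \<and> Q' = fmap K S P'"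
proof -
  obtain x where x: "star_col c col x \<in> D" "playable (star_V S) (star_E S) (fmap K S P) x"
    "Q' = insert x (fmap K S P)" using m unfolding mv_def by blast
  have dj: "K \<inter> S = {}" and VKS: "V = K \<union> S" using csg unfolding complete_split_graph_def by blast+
  have Q: "fmap K S P \<subseteq> star_V S" unfolding fmap_def star_V_def by auto
  have pl: "(x = None \<and> None \<notin> fmap K S P \<and> (fmap K S P = {} \<or> \<not> Some ` S \<subseteq> fmap K S P))
        \<or> (\<exists>s\<in>S. x = Some s \<and> None \<notin> fmap K S P \<and> Some s \<notin> fmap K S P)"
    using iffD1[OF star_playable[OF Q] x(2)] .
  have "None \<notin> fmap K S P" using pl by blast
  then have PK: "P \<inter> K = {}" using fmap_None by blast
  have PS: "P \<subseteq> S" using P VKS PK by blast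
  have fP: "fmap K S P = Some ` P" using PK PS fmap_K by blast
  from pl show ?thesis
  proof
    assume a: "x = None \<and> None \<notin> fmap K S P \<and> (fmap K S P = {} \<or> \<not> Some ` S \<subseteq> fmap K S P)"
    then have "c \<in> D" using x(1) unfolding star_col_def by simp
    then obtain k where k: "k \<in> K" "col k \<in> D" using hc by blast
    have "Some ` P = {} \<or> \<not> Some ` S \<subseteq> Some ` P" using a fP by simp
    then have "P = {} \<or> \<not> S \<subseteq> P" using Some_sub[of S P] by blast
    then have pk: "playable V E P k" using iffD2[OF G_playable[OF csg P], of k] k PK by blast
    have e: "fmap K S (insert k P) = Q'" using x(3) a fP fmap_ins_K[of k K S P] k dj PS by simp
    have "insert k P \<subseteq> V" using P k VKS by blast
    moreover have "mv V E col D P (insert k P)" using mv_intro[of col k D, OF k(2) pk] .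
    ultimately show ?thesis using e by blast
  next
    assume "\<exists>s\<in>S. x = Some s \<and> None \<notin> fmap K S P \<and> Some s \<notin> fmap K S P"
    then obtain s where s: "s \<in> S" "x = Some s" "Some s \<notin> fmap K S P" by blast
    have "s \<notin> P" using s fP by auto
    then have ps: "playable V E P s" using iffD2[OF G_playable[OF csg P], of s] s PK by blast
    have cs: "col s \<in> D" using x(1) s(2) unfolding star_col_def by simp
    have e: "fmap K S (insert s P) = Q'" using x(3) s fP fmap_ins_S[of s S P K] PK dj PS by simp
    have "insert s P \<subseteq> V" using P s VKS by blast
    moreover have "mv V E col D P (insert s P)" using mv_intro[of col s D, OF cs ps] .
    ultimately show ?thesis using e by blast
  qed
qed

lemma main:
  assumes csg: "complete_split_graph V E K S"
    and h1: "c \<in> {A, C} \<longleftrightarrow> (\<exists>k\<in>K. col k \<in> {A, C})"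
    and h2: "c \<in> {B, C} \<longleftrightarrow> (\<exists>k\<in>K. col k \<in> {B, C})"
  shows "dom_game_eq V E col (star_V S) (star_E S) (star_col c col)"
proof -
  have eL: "\<And>V E col. dom_L V E col = mv V E col {A, C}"
    by (simp add: fun_eq_iff dom_L_def mv_def)
  have eR: "\<And>V E col. dom_R V E col = mv V E col {B, C}"
    by (simp add: fun_eq_iff dom_R_def mv_def)
  have fin: "finite V" using csg unfolding complete_split_graph_def simple_graph_def by blast
  let ?Rel = "\<lambda>P Q. P \<subseteq> V \<and> Q = fmap K S P"
  have "game_eq (mv V E col {A, C}) (mv V E col {B, C}) {}
     (mv (star_V S) (star_E S) (star_col c col) {A, C}) (mv (star_V S) (star_E S) (star_col c col) {B, C}) {}"
  proof (rule bisim_eq[where Rel = ?Rel])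
    show "wf {(p', p). mv V E col {A, C} p p' \<or> mv V E col {B, C} p p'}" by (rule wf_mv[OF fin])
    show "?Rel {} {}" unfolding fmap_def by auto
  next
    fix p q p' assume "?Rel p q" "mv V E col {A, C} p p'"
    then show "\<exists>q'. mv (star_V S) (star_E S) (star_col c col) {A, C} q q' \<and> ?Rel p' q'"
      using fwd[OF csg h1] by blast
  next
    fix p q q' assume "?Rel p q" "mv (star_V S) (star_E S) (star_col c col) {A, C} q q'"
    then show "\<exists>p'. mv V E col {A, C} p p' \<and> ?Rel p' q'"
      using bwd[OF csg h1] by blast
  next
    fix p q p' assume "?Rel p q" "mv V E col {B, C} p p'"
    then show "\<exists>q'. mv (star_V S) (star_E S) (star_col c col) {B, C} q q' \<and> ?Rel p' q'"
      using fwd[OF csg h2] by blast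
  next
    fix p q q' assume "?Rel p q" "mv (star_V S) (star_E S) (star_col c col) {B, C} q q'"
    then show "\<exists>p'. mv V E col {B, C} p p' \<and> ?Rel p' q'"
      using bwd[OF csg h2] by blast
  qed
  then show ?thesis unfolding dom_game_eq_def eL eR .
qed


theorem theorem10:
  fixes V K S :: "'v set" and E :: "'v \<Rightarrow> 'v \<Rightarrow> bool" and col :: "'v \<Rightarrow> colour"
  assumes "complete_split_graph V E K S" and "K \<noteq> {}"
  shows "((\<forall>k\<in>K. col k = A) \<longrightarrow> dom_game_eq V E col (star_V S) (star_E S) (star_col A col))
       \<and> ((\<forall>k\<in>K. col k = B) \<longrightarrow> dom_game_eq V E col (star_V S) (star_E S) (star_col B col))
       \<and> ((\<not> (\<forall>k\<in>K. col k = A) \<and> \<not> (\<forall>k\<in>K. col k = B)) \<longrightarrow>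
            dom_game_eq V E col (star_V S) (star_E S) (star_col C col))"
proof (intro conjI impI)
  assume h: "\<forall>k\<in>K. col k = A"
  show "dom_game_eq V E col (star_V S) (star_E S) (star_col A col)"
    by (rule main[OF assms(1)]) (use h assms(2) in auto)
next
  assume h: "\<forall>k\<in>K. col k = B"
  show "dom_game_eq V E col (star_V S) (star_E S) (star_col B col)"
    by (rule main[OF assms(1)]) (use h assms(2) in auto)
next
  assume h: "\<not> (\<forall>k\<in>K. col k = A) \<and> \<not> (\<forall>k\<in>K. col k = B)"
  then obtain k1 k2 where "k1 \<in> K" "col k1 \<noteq> A" "k2 \<in> K" "col k2 \<noteq> B" by blast
  then have "\<exists>k\<in>K. col k \<in> {B, C}" "\<exists>k\<in>K. col k \<in> {A, C}"
    by (metis colour.exhaust insertCI)+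
  then show "dom_game_eq V E col (star_V S) (star_E S) (star_col C col)"
    by (intro main[OF assms(1)]) auto
qed

end
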